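(* Let $D$ be a digraph with vertex set $\{v_1,\ldots,v_n\}$. For $i=1,\ldots,n$ let $d_i^+=|N^+(v_i)|$ and $d_i^-=|N^-(v_i)|$ be the out-degree and in-degree of $v_i$, and let $d_i=|N^+(v_i)\cup N^-(v_i)|$ be the degree of $v_i$ (the number of vertices adjacent to $v_i$). Then $$\alpha(D)\geq \sum_{i=1}^n \left( \frac{1}{1+d_i^+} + \frac{1}{1+d_i^-} - \frac{1}{1+d_i}\right).$$
   Context: All digraphs are finite, loopless and strict (for distinct vertices $u,v$ there is at most one edge from $u$ to $v$; edges in both directions are allowed). $N^+(v)$ and $N^-(v)$ denote the sets of out-neighbours and in-neighbours of $v$. A subset $S\subseteq V(D)$ is acyclic if the induced subdigraph $D[S]$ contains no directed cycle. The independence number $\alpha(D)$ is the maximum size of an acyclic subset of $V(D)$. *)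

theory Defs
  imports Complex_Main
begin

text \<open>Strictness is automatic
  (E is a relation); we require looplessness and that edges lie within V.\<close>

definition digraph :: "'a set \<Rightarrow> ('a \<Rightarrow> 'a \<Rightarrow> bool) \<Rightarrow> bool" where
  "digraph V E \<longleftrightarrow> finite V \<and> (\<forall>u v. E u v \<longrightarrow> u \<in> V \<and> v \<in> V) \<and> (\<forall>v. \<not> E v v)"

definition out_nbrs :: "'a set \<Rightarrow> ('a \<Rightarrow> 'a \<Rightarrow> bool) \<Rightarrow> 'a \<Rightarrow> 'a set" where
  "out_nbrs V E v = {u \<in> V. E v u}"

definition in_nbrs :: "'a set \<Rightarrow> ('a \<Rightarrow> 'a \<Rightarrow> bool) \<Rightarrow> 'a \<Rightarrow> 'a set" where
  "in_nbrs V E v = {u \<in> V. E u v}"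

definition induced_edges :: "('a \<Rightarrow> 'a \<Rightarrow> bool) \<Rightarrow> 'a set \<Rightarrow> ('a \<times> 'a) set" where
  "induced_edges E S = {(u, v). u \<in> S \<and> v \<in> S \<and> E u v}"

definition acyclic_set :: "'a set \<Rightarrow> ('a \<Rightarrow> 'a \<Rightarrow> bool) \<Rightarrow> 'a set \<Rightarrow> bool" where
  "acyclic_set V E S \<longleftrightarrow> S \<subseteq> V \<and> acyclic (induced_edges E S)"

definition dichromatic_alpha :: "'a set \<Rightarrow> ('a \<Rightarrow> 'a \<Rightarrow> bool) \<Rightarrow> nat" where
  "dichromatic_alpha V E = Max (card ` {S. acyclic_set V E S})"

end

theory Submission
  imports Defs "HOL-Combinatorics.Multiset_Permutations" "HOL-Combinatorics.Transposition"
begin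

definition rk :: "'a list \<Rightarrow> 'a \<Rightarrow> nat" where
  "rk xs v = length (takeWhile (\<lambda>x. x \<noteq> v) xs)"

definition fst_in :: "'a list \<Rightarrow> 'a set \<Rightarrow> 'a \<Rightarrow> bool" where
  "fst_in xs N v \<longleftrightarrow> (\<forall>u\<in>N. u \<noteq> v \<longrightarrow> rk xs v < rk xs u)"

lemma rk_nth:
  assumes "v \<in> set xs"
  shows "rk xs v < length xs" "xs ! rk xs v = v"
proof -
  have "length (takeWhile (\<lambda>x. x \<noteq> v) xs) < length xs"
  proof (rule ccontr)
    assume "\<not> ?thesis"
    then have "takeWhile (\<lambda>x. x \<noteq> v) xs = xs"
      by (metis not_less takeWhile_eq_take take_all)
    then have "\<forall>x\<in>set xs. x \<noteq> v" by (simp add: takeWhile_eq_all_conv)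
    with assms show False by blast
  qed
  then show "rk xs v < length xs" "xs ! rk xs v = v"
    unfolding rk_def using nth_length_takeWhile by fastforce+
qed

lemma rk_inj:
  assumes "u \<in> set xs" "v \<in> set xs" "rk xs u = rk xs v"
  shows "u = v"
  using rk_nth(2)[OF assms(1)] rk_nth(2)[OF assms(2)] assms(3) by metis

lemma rk_map:
  assumes "inj f"
  shows "rk (map f xs) (f v) = rk xs v"
proof -
  have "((\<lambda>x. x \<noteq> f v) \<circ> f) = (\<lambda>x. x \<noteq> v)"
    using assms by (auto simp: inj_eq)
  then show ?thesis unfolding rk_def by (simp add: takeWhile_map)
qed

lemma fst_swap:
  assumes V: "finite V" and N: "N \<subseteq> V" "u \<in> N" "v \<in> N"
    and xs: "xs \<in> permutations_of_set V" "fst_in xs N v"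
  shows "map (transpose u v) xs \<in> permutations_of_set V \<and> fst_in (map (transpose u v) xs) N u"
proof
  let ?s = "transpose u v"
  have sx: "set xs = V" "distinct xs" using xs(1) by (auto dest: permutations_of_setD)
  have "?s ` V = V" using N by (intro transpose_image_eq) auto
  then show "map ?s xs \<in> permutations_of_set V"
    using sx by (intro permutations_of_setI) (auto simp: distinct_map)
  have sN: "?s w \<in> N" if "w \<in> N" for w using that N by (auto simp: transpose_def)
  show "fst_in (map ?s xs) N u"
    unfolding fst_in_def
  proof (intro ballI impI)
    fix w assume w: "w \<in> N" "w \<noteq> u"
    have "rk (map ?s xs) u = rk xs v"
      using rk_map[OF inj_transpose, of u v xs v] by simp
    moreover have "rk (map ?s xs) w = rk xs (?s w)"
      using rk_map[OF inj_transpose, of u v xs "?s w"] by simp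
    moreover have "?s w \<noteq> v" using w by (auto simp: transpose_eq_iff)
    ultimately show "rk (map ?s xs) u < rk (map ?s xs) w"
      using xs(2) sN[OF w(1)] unfolding fst_in_def by auto
  qed
qed

lemma card_fst_le:
  assumes V: "finite V" and N: "N \<subseteq> V" "u \<in> N" "v \<in> N"
  shows "card {xs \<in> permutations_of_set V. fst_in xs N v}
         \<le> card {xs \<in> permutations_of_set V. fst_in xs N u}"
proof (rule card_inj_on_le[where f = "map (transpose u v)"])
  show "inj_on (map (transpose u v)) {xs \<in> permutations_of_set V. fst_in xs N v}"
    by (intro inj_on_subset[OF inj_mapI[OF inj_transpose]]) auto
  show "map (transpose u v) ` {xs \<in> permutations_of_set V. fst_in xs N v}
        \<subseteq> {xs \<in> permutations_of_set V. fst_in xs N u}"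
    using fst_swap[OF assms] by blast
qed auto

lemma card_fst:
  assumes V: "finite V" and N: "N \<subseteq> V" "v \<in> N"
  shows "card N * card {xs \<in> permutations_of_set V. fst_in xs N v} = fact (card V)"
proof -
  let ?P = "permutations_of_set V"
  let ?A = "\<lambda>u. {xs \<in> ?P. fst_in xs N u}"
  have fN: "finite N" using V N finite_subset by blast
  have eq: "card (?A u) = card (?A v)" if "u \<in> N" for u
    using card_fst_le[OF V N(1) that N(2)] card_fst_le[OF V N(1) N(2) that] by simp
  have cover: "?P = (\<Union>u\<in>N. ?A u)"
  proof (intro equalityI subsetI)
    fix xs assume xs: "xs \<in> ?P"
    have sx: "set xs = V" using xs by (auto dest: permutations_of_setD)
    have ne: "rk xs ` N \<noteq> {}" using N by auto
    have fin: "finite (rk xs ` N)" using fN by auto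
    obtain u where u: "u \<in> N" "rk xs u = Min (rk xs ` N)" using Min_in[OF fin ne] by auto
    have "fst_in xs N u" unfolding fst_in_def
    proof (intro ballI impI)
      fix w assume w: "w \<in> N" "w \<noteq> u"
      have le: "rk xs u \<le> rk xs w" unfolding u(2) using w fin by (intro Min_le) auto
      have uw: "u \<in> set xs" "w \<in> set xs" using u(1) w(1) N(1) sx by blast+
      have ne: "rk xs u \<noteq> rk xs w" using rk_inj[OF uw] w(2) by metis
      from le ne show "rk xs u < rk xs w" by simp
    qed
    then show "xs \<in> (\<Union>u\<in>N. ?A u)" using u xs by auto
  qed auto
  have "card ?P = card (\<Union>u\<in>N. ?A u)" by (rule arg_cong[OF cover])
  also have "\<dots> = (\<Sum>u\<in>N. card (?A u))"
  proof (rule card_UN_disjoint[OF fN])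
    show "\<forall>i\<in>N. finite (?A i)" by auto
    show "\<forall>i\<in>N. \<forall>j\<in>N. i \<noteq> j \<longrightarrow> ?A i \<inter> ?A j = {}"
    proof (intro ballI impI)
      fix i j assume ij: "i \<in> N" "j \<in> N" "i \<noteq> j"
      show "?A i \<inter> ?A j = {}"
      proof (rule ccontr)
        assume "?A i \<inter> ?A j \<noteq> {}"
        then obtain xs where "fst_in xs N i" "fst_in xs N j" by auto
        then have h: "\<forall>u\<in>N. u \<noteq> i \<longrightarrow> rk xs i < rk xs u" "\<forall>u\<in>N. u \<noteq> j \<longrightarrow> rk xs j < rk xs u"
          unfolding fst_in_def by blast+
        have "rk xs i < rk xs j" using h(1) ij by metis
        moreover have "rk xs j < rk xs i" using h(2) ij by blast
        ultimately show False by simp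
      qed
    qed
  qed
  also have "\<dots> = (\<Sum>u\<in>N. card (?A v))" by (rule sum.cong[OF refl]) (rule eq)
  also have "\<dots> = card N * card (?A v)" by simp
  finally show ?thesis using V by simp
qed


lemma fst_in_insert: "fst_in xs (insert v X) v \<longleftrightarrow> fst_in xs X v"
  unfolding fst_in_def by auto

lemma fst_in_Un: "fst_in xs (X \<union> Y) v \<longleftrightarrow> fst_in xs X v \<and> fst_in xs Y v"
  unfolding fst_in_def by auto

definition SS :: "'a set \<Rightarrow> ('a \<Rightarrow> 'a \<Rightarrow> bool) \<Rightarrow> 'a list \<Rightarrow> 'a set" where
  "SS V E xs = {v \<in> V. fst_in xs (out_nbrs V E v) v \<or> fst_in xs (in_nbrs V E v) v}"

lemma SS_acyclic:
  assumes D: "digraph V E" and xs: "xs \<in> permutations_of_set V"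
  shows "acyclic_set V E (SS V E xs)"
proof -
  let ?S = "SS V E xs"
  let ?r = "induced_edges E ?S"
  have sx: "set xs = V" using xs by (auto dest: permutations_of_setD)
  have fV: "finite V" and loop: "\<And>v. \<not> E v v" and EV: "\<And>u v. E u v \<Longrightarrow> u \<in> V \<and> v \<in> V"
    using D unfolding digraph_def by auto
  have SV: "?S \<subseteq> V" unfolding SS_def by auto
  have "acyclic ?r"
    unfolding acyclic_def
  proof (intro allI notI)
    fix x assume xx: "(x, x) \<in> ?r\<^sup>+"
    define C where "C = {y. (x, y) \<in> ?r\<^sup>* \<and> (y, x) \<in> ?r\<^sup>*}"
    have xC: "x \<in> C" unfolding C_def by simp
    have rS: "\<And>a b. (a, b) \<in> ?r \<Longrightarrow> a \<in> ?S \<and> b \<in> ?S \<and> E a b"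
      unfolding induced_edges_def by auto
    obtain z where "(x, z) \<in> ?r" using tranclD[OF xx] by blast
    then have xS: "x \<in> ?S" using rS by blast
    have CS: "C \<subseteq> ?S"
    proof
      fix y assume "y \<in> C"
      then have "(x, y) \<in> ?r\<^sup>*" unfolding C_def by auto
      then show "y \<in> ?S"
      proof (cases rule: rtranclE)
        case base then show ?thesis using xS by simp
      next
        case (step w) then show ?thesis using rS by blast
      qed
    qed
    have "C \<subseteq> V" using CS SV by (rule subset_trans)
    then have fC: "finite C" using fV by (rule finite_subset)
    have ne: "rk xs ` C \<noteq> {}" using xC by auto
    obtain m where m: "m \<in> C" "rk xs m = Max (rk xs ` C)"
      using Max_in[OF finite_imageI[OF fC] ne] by auto
    have mx: "\<And>y. y \<in> C \<Longrightarrow> rk xs y \<le> rk xs m"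
      unfolding m(2) using fC by (intro Max_ge) auto
    have mm: "(m, m) \<in> ?r\<^sup>+"
    proof -
      have "(m, x) \<in> ?r\<^sup>*" "(x, m) \<in> ?r\<^sup>*" using m unfolding C_def by auto
      then show ?thesis using xx
        by (meson rtrancl_trancl_trancl trancl_rtrancl_trancl)
    qed
    obtain s where s: "(m, s) \<in> ?r" "(s, m) \<in> ?r\<^sup>*" using tranclD[OF mm] by auto
    obtain p where p: "(m, p) \<in> ?r\<^sup>*" "(p, m) \<in> ?r" using tranclD2[OF mm] by auto
    have sC: "s \<in> C"
    proof -
      have xm: "(x, m) \<in> ?r\<^sup>*" "(m, x) \<in> ?r\<^sup>*" using m unfolding C_def by auto
      have "(x, s) \<in> ?r\<^sup>*" by (rule rtrancl_into_rtrancl[OF xm(1) s(1)])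
      moreover have "(s, x) \<in> ?r\<^sup>*" by (rule rtrancl_trans[OF s(2) xm(2)])
      ultimately show ?thesis unfolding C_def by simp
    qed
    have pC: "p \<in> C"
    proof -
      have xm: "(x, m) \<in> ?r\<^sup>*" "(m, x) \<in> ?r\<^sup>*" using m unfolding C_def by auto
      have "(x, p) \<in> ?r\<^sup>*" by (rule rtrancl_trans[OF xm(1) p(1)])
      moreover have "(p, x) \<in> ?r\<^sup>*" by (rule converse_rtrancl_into_rtrancl[OF p(2) xm(2)])
      ultimately show ?thesis unfolding C_def by simp
    qed
    have Ems: "E m s" and Epm: "E p m" using rS s(1) p(2) by auto
    have mS: "m \<in> ?S" using m CS by auto
    have lt_s: "rk xs s < rk xs m"
    proof -
      have "rk xs s \<noteq> rk xs m" using rk_inj[of s xs m] sx EV[OF Ems] loop Ems by auto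
      then show ?thesis using mx[OF sC] by simp
    qed
    have lt_p: "rk xs p < rk xs m"
    proof -
      have "rk xs p \<noteq> rk xs m" using rk_inj[of p xs m] sx EV[OF Epm] loop Epm by auto
      then show ?thesis using mx[OF pC] by simp
    qed
    have "s \<in> out_nbrs V E m" "s \<noteq> m" using Ems EV loop unfolding out_nbrs_def by auto
    moreover have "p \<in> in_nbrs V E m" "p \<noteq> m" using Epm EV loop unfolding in_nbrs_def by auto
    ultimately show False using mS lt_s lt_p unfolding SS_def fst_in_def by force
  qed
  then show ?thesis using SV unfolding acyclic_set_def by simp
qed

lemma card_fst_real:
  assumes V: "finite V" and N: "N \<subseteq> V" "v \<notin> N" "v \<in> V"
  shows "real (card {xs \<in> permutations_of_set V. fst_in xs N v})
     = real (fact (card V)) / (1 + real (card N))"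
proof -
  have fN: "finite N" using V N finite_subset by blast
  have "card (insert v N) * card {xs \<in> permutations_of_set V. fst_in xs (insert v N) v} = fact (card V)"
    using card_fst[of V "insert v N" v] V N by auto
  then have "card {xs \<in> permutations_of_set V. fst_in xs N v} + card N * card {xs \<in> permutations_of_set V. fst_in xs N v} = (fact (card V) :: nat)"
    using fN N(2) by (simp add: fst_in_insert)
  then have "real (card {xs \<in> permutations_of_set V. fst_in xs N v}) + real (card N) * real (card {xs \<in> permutations_of_set V. fst_in xs N v}) = real (fact (card V) :: nat)"
    by (simp only: of_nat_add[symmetric] of_nat_mult[symmetric] of_nat_eq_iff)
  then show ?thesis by (simp add: field_simps)
qed


lemma card_SS_le:
  assumes D: "digraph V E" and xs: "xs \<in> permutations_of_set V"
  shows "card (SS V E xs) \<le> dichromatic_alpha V E"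
proof -
  have fV: "finite V" using D unfolding digraph_def by auto
  have "card ` {S. acyclic_set V E S} \<subseteq> card ` Pow V" unfolding acyclic_set_def by auto
  then have "finite (card ` {S. acyclic_set V E S})" using fV finite_subset by blast
  then show ?thesis unfolding dichromatic_alpha_def
    using SS_acyclic[OF D xs] by (intro Max_ge) auto
qed

lemma count_swap:
  assumes fV: "finite V" and sub: "\<And>xs. xs \<in> P \<Longrightarrow> SS V E xs \<subseteq> V" and fP: "finite P"
  shows "(\<Sum>xs\<in>P. card (SS V E xs)) = (\<Sum>v\<in>V. card {xs \<in> P. v \<in> SS V E xs})"
proof -
  have "(\<Sum>xs\<in>P. card (SS V E xs)) = (\<Sum>xs\<in>P. \<Sum>v\<in>V. if v \<in> SS V E xs then 1 else 0)"
  proof (rule sum.cong[OF refl])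
    fix xs assume "xs \<in> P"
    then have "SS V E xs \<subseteq> V" using sub by auto
    then show "card (SS V E xs) = (\<Sum>v\<in>V. if v \<in> SS V E xs then 1 else 0)"
      using fV by (simp add: sum.If_cases Int_absorb1)
  qed
  also have "\<dots> = (\<Sum>v\<in>V. \<Sum>xs\<in>P. if v \<in> SS V E xs then 1 else 0)" by (rule sum.swap)
  also have "\<dots> = (\<Sum>v\<in>V. card {xs \<in> P. v \<in> SS V E xs})"
    using fP by (simp add: sum.If_cases Int_def)
  finally show ?thesis .
qed

theorem mainTheorem1:
  fixes V :: "'a set" and E :: "'a \<Rightarrow> 'a \<Rightarrow> bool"
  assumes "digraph V E"
  shows "(\<Sum>v\<in>V. 1 / (1 + real (card (out_nbrs V E v)))
                 + 1 / (1 + real (card (in_nbrs V E v)))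
                 - 1 / (1 + real (card (out_nbrs V E v \<union> in_nbrs V E v))))
         \<le> real (dichromatic_alpha V E)"
proof -
  let ?P = "permutations_of_set V"
  let ?F = "real (fact (card V) :: nat)"
  let ?O = "out_nbrs V E" and ?I = "in_nbrs V E"
  have D: "digraph V E" by fact
  have fV: "finite V" and loop: "\<And>v. \<not> E v v"
    using D unfolding digraph_def by auto
  have OV: "?O v \<subseteq> V" "v \<notin> ?O v" and IV: "?I v \<subseteq> V" "v \<notin> ?I v" for v
    using loop unfolding out_nbrs_def in_nbrs_def by auto
  have per_v: "real (card {xs \<in> ?P. v \<in> SS V E xs})
      = ?F * (1 / (1 + real (card (?O v))) + 1 / (1 + real (card (?I v)))
               - 1 / (1 + real (card (?O v \<union> ?I v))))" if v: "v \<in> V" for v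
  proof -
    let ?A = "{xs \<in> ?P. fst_in xs (?O v) v}" and ?B = "{xs \<in> ?P. fst_in xs (?I v) v}"
    have eq1: "{xs \<in> ?P. v \<in> SS V E xs} = ?A \<union> ?B" using v unfolding SS_def by auto
    have eq2: "?A \<inter> ?B = {xs \<in> ?P. fst_in xs (?O v \<union> ?I v) v}" by (auto simp: fst_in_Un)
    have "card (?A \<union> ?B) + card (?A \<inter> ?B) = card ?A + card ?B"
      using card_Un_Int[of ?A ?B] by simp
    then have "real (card (?A \<union> ?B)) + real (card (?A \<inter> ?B)) = real (card ?A) + real (card ?B)"
      by (simp only: of_nat_add[symmetric] of_nat_eq_iff)
    then have "real (card (?A \<union> ?B)) = real (card ?A) + real (card ?B) - real (card (?A \<inter> ?B))"
      by linarith
    also have "\<dots> = ?F / (1 + real (card (?O v))) + ?F / (1 + real (card (?I v)))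
         - ?F / (1 + real (card (?O v \<union> ?I v)))"
      unfolding eq2 using OV[of v] IV[of v] v fV
      by (simp add: card_fst_real)
    finally show ?thesis unfolding eq1 by (simp add: algebra_simps)
  qed
  have "?F * (\<Sum>v\<in>V. 1 / (1 + real (card (?O v))) + 1 / (1 + real (card (?I v)))
               - 1 / (1 + real (card (?O v \<union> ?I v))))
        = (\<Sum>v\<in>V. real (card {xs \<in> ?P. v \<in> SS V E xs}))"
    by (simp add: sum_distrib_left per_v)
  also have "\<dots> = real (\<Sum>xs\<in>?P. card (SS V E xs))"
    using count_swap[of V ?P E] fV by (simp add: SS_def)
  also have "\<dots> \<le> real (\<Sum>xs\<in>?P. dichromatic_alpha V E)"
    using card_SS_le[OF D] by (intro of_nat_mono sum_mono) auto
  also have "\<dots> = ?F * real (dichromatic_alpha V E)" using fV by simp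
  finally show ?thesis
    by (simp add: mult_le_cancel_left_pos)
qed

end
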